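(* Let $m\ge2$, $0\le i\le m-2$ (and, if $m$ is odd, $e_i\in\mathbb{C}$), and let $B_i(\mathbb{R}^m)=\{f\in L_1(\mathbb{R}^m):\int_{\mathbb{R}^m}(1+|\underline{y}|)^i|f(\underline{y})|\,dV(\underline{y})<\infty\}$ (so $B_0=L_1$). Then the integral transform $\mathcal{F}^i_{+,m}[f](\underline{y})=(2\pi)^{-m/2}\int_{\mathbb{R}^m}K^i_{+,m}(\underline{x},\underline{y})f(\underline{x})\,dV(\underline{x})$ is well-defined for $f\in B_i(\mathbb{R}^m)\otimes\mathcal{C}l_{0,m}$, and for such $f$ the function $\mathcal{F}^i_{+,m}[f]$ is continuous.
   Context: $\mathcal{C}l_{0,m}$ is the real Clifford algebra generated by $e_1,\dots,e_m$ with $e_je_k+e_ke_j=-2\delta_{jk}$; $\underline{x}=\sum_jx_je_j$, $\underline{x}\wedge\underline{y}=\sum_{j<k}e_je_k(x_jy_k-x_ky_j)$, $s=\langle\underline{x},\underline{y}\rangle$, $t=|\underline{x}\wedge\underline{y}|$, $\widetilde J_\alpha(t)=t^{-\alpha}J_\alpha(t)$. Put $\kappa_m=\sqrt{\pi/2}$, $\sigma_m=(-1)^{m/2}$ for $m$ even and $\kappa_m=1$, $\sigma_m=(-1)^{(m+1)/2}$ for $m$ odd, and $\tilde f_m^i=-\kappa_m\sum_{\ell=0}^{\lfloor (i-1)/2\rfloor}s^{i-1-2\ell}\frac{1}{2^\ell\ell!}\frac{\Gamma(i+1)}{\Gamma(i-2\ell)}\widetilde J_{(m-2\ell-3)/2}(t)$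 ($i\ge1$), $\tilde f_m^0:=0$; $\hat f_m^i=\sigma_m(-1)^i\kappa_m\sum_{\ell=0}^{\lfloor i/2\rfloor}s^{i-2\ell}\frac{1}{2^\ell\ell!}\frac{\Gamma(i+1)}{\Gamma(i+1-2\ell)}\widetilde J_{(m-2\ell-3)/2}(t)$; $g_m^i=\kappa_m\sum_{\ell=0}^{\lfloor i/2\rfloor}s^{i-2\ell}\frac{1}{2^\ell\ell!}\frac{\Gamma(i+1)}{\Gamma(i+1-2\ell)}\widetilde J_{(m-2\ell-1)/2}(t)$. For $m$ even $K^i_{+,m}=\tilde f_m^i+\hat f_m^i+(\underline{x}\wedge\underline{y})g_m^i$; for $m$ odd $K^i_{+,m}=e_i\tilde f_m^i+I\,e_i^c\,\hat f_m^i+(\underline{x}\wedge\underline{y})e_ig_m^i$, with $I$ the complex unit and $c$ complex conjugation. *)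

theory Defs
  imports "HOL-Analysis.Analysis"
begin

text \<open>The basis vectors e_j of Cl_{0,m} are indexed by the finite linearly ordered type 'n,
  with m = CARD('n).  A (complexified) Clifford number is given by its coefficients on the
  basis blades e_A = e_{j1} ... e_{jk} (A = {j1 < ... < jk}), i.e. a function 'n set => complex.
  Real Clifford numbers are functions 'n set => real.\<close>

type_synonym 'n clif = "'n set \<Rightarrow> complex"

text \<open>Sign in e_A e_B = sign A B e_{A symdiff B}, using e_j e_k = - e_k e_j (j ~= k) and e_j^2 = -1.\<close>
definition cl_sign :: "'n::{finite,linorder} set \<Rightarrow> 'n set \<Rightarrow> real" where
  "cl_sign A B = (-1) ^ (card {(a, b). a \<in> A \<and> b \<in> B \<and> b < a} + card (A \<inter> B))"

definition cl_mult :: "'n::{finite,linorder} clif \<Rightarrow> 'n clif \<Rightarrow> 'n clif" where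
  "cl_mult u v = (\<lambda>C. \<Sum>A\<in>UNIV. \<Sum>B\<in>UNIV.
      if (A - B) \<union> (B - A) = C then complex_of_real (cl_sign A B) * u A * v B else 0)"

definition cl_scalar :: "complex \<Rightarrow> 'n::{finite,linorder} clif" where
  "cl_scalar c = (\<lambda>A. if A = {} then c else 0)"

text \<open>x wedge y = sum_{j<k} e_j e_k (x_j y_k - x_k y_j); note e_j e_k = e_{{j,k}} for j < k.\<close>
definition wedge_coef :: "(real, 'n::{finite,linorder}) vec \<Rightarrow> (real, 'n) vec \<Rightarrow> 'n \<Rightarrow> 'n \<Rightarrow> real" where
  "wedge_coef x y j k = x$j * y$k - x$k * y$j"

definition wedge :: "(real, 'n::{finite,linorder}) vec \<Rightarrow> (real, 'n) vec \<Rightarrow> 'n clif" where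
  "wedge x y = (\<lambda>A. \<Sum>j\<in>UNIV. \<Sum>k\<in>UNIV.
      if j < k \<and> A = {j, k} then complex_of_real (wedge_coef x y j k) else 0)"

definition wedge_norm :: "(real, 'n::{finite,linorder}) vec \<Rightarrow> (real, 'n) vec \<Rightarrow> real" where
  "wedge_norm x y = sqrt (\<Sum>j\<in>UNIV. \<Sum>k\<in>UNIV. if j < k then (wedge_coef x y j k)^2 else 0)"

text \<open>tildeJ alpha t = t^(-alpha) J_alpha(t), written out via the power series of J_alpha,
  J_alpha(t) = sum_k (-1)^k / (k! Gamma(k+alpha+1)) (t/2)^(2k+alpha); this is the (entire)
  continuous extension, also at t = 0.\<close>
definition tildeJ :: "real \<Rightarrow> real \<Rightarrow> real" where
  "tildeJ \<alpha> t = (\<Sum>k. (-1) ^ k / (fact k * Gamma (real k + \<alpha> + 1)) * (t / 2) ^ (2 * k)) / 2 powr \<alpha>"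

definition kappa :: "nat \<Rightarrow> real" where
  "kappa m = (if even m then sqrt (pi / 2) else 1)"

definition sigma :: "nat \<Rightarrow> real" where
  "sigma m = (if even m then (-1) ^ (m div 2) else (-1) ^ ((m + 1) div 2))"

definition f_tilde :: "nat \<Rightarrow> nat \<Rightarrow> real \<Rightarrow> real \<Rightarrow> real" where
  "f_tilde m i s t = (if i = 0 then 0 else
     - kappa m * (\<Sum>l\<in>{0..(i - 1) div 2}. s ^ (i - 1 - 2 * l) * (1 / (2 ^ l * fact l))
        * (Gamma (real i + 1) / Gamma (real i - 2 * real l))
        * tildeJ ((real m - 2 * real l - 3) / 2) t))"

definition f_hat :: "nat \<Rightarrow> nat \<Rightarrow> real \<Rightarrow> real \<Rightarrow> real" where
  "f_hat m i s t = sigma m * (-1) ^ i * kappa m *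
     (\<Sum>l\<in>{0..i div 2}. s ^ (i - 2 * l) * (1 / (2 ^ l * fact l))
        * (Gamma (real i + 1) / Gamma (real i + 1 - 2 * real l))
        * tildeJ ((real m - 2 * real l - 3) / 2) t)"

definition g_fun :: "nat \<Rightarrow> nat \<Rightarrow> real \<Rightarrow> real \<Rightarrow> real" where
  "g_fun m i s t = kappa m *
     (\<Sum>l\<in>{0..i div 2}. s ^ (i - 2 * l) * (1 / (2 ^ l * fact l))
        * (Gamma (real i + 1) / Gamma (real i + 1 - 2 * real l))
        * tildeJ ((real m - 2 * real l - 1) / 2) t)"

text \<open>K^i_{+,m}(x,y) with m = CARD('n); the complex constant e (called e_i in the paper)
  only enters for m odd.\<close>
definition K_plus :: "nat \<Rightarrow> complex \<Rightarrow> (real, 'n::{finite,linorder}) vec \<Rightarrow> (real, 'n) vec \<Rightarrow> 'n clif" where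
  "K_plus i e x y =
    (let m = CARD('n); s = inner x y; t = wedge_norm x y in
     if even m then
       (\<lambda>A. cl_scalar (complex_of_real (f_tilde m i s t + f_hat m i s t)) A
            + complex_of_real (g_fun m i s t) * wedge x y A)
     else
       (\<lambda>A. cl_scalar (e * complex_of_real (f_tilde m i s t)
                        + \<i> * cnj e * complex_of_real (f_hat m i s t)) A
            + e * complex_of_real (g_fun m i s t) * wedge x y A))"

definition B_space :: "nat \<Rightarrow> ((real, 'n::{finite,linorder}) vec \<Rightarrow> real) set" where
  "B_space i = {g. integrable lborel g \<and>
                   integrable lborel (\<lambda>y. (1 + norm y) ^ i * \<bar>g y\<bar>)}"

definition F_plus :: "nat \<Rightarrow> complex \<Rightarrow> ((real, 'n::{finite,linorder}) vec \<Rightarrow> ('n set \<Rightarrow> real))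
                      \<Rightarrow> (real, 'n) vec \<Rightarrow> 'n clif" where
  "F_plus i e f y = (\<lambda>A. complex_of_real ((2 * pi) powr (- (real CARD('n) / 2))) *
      (\<integral>x. cl_mult (K_plus i e x y) (\<lambda>B. complex_of_real (f x B)) A \<partial>lborel))"

end

theory Submission
  imports Defs
begin


definition cc :: "real \<Rightarrow> nat \<Rightarrow> real" where
  "cc a n = (-1) ^ n / (fact n * Gamma (real n + a + 1))"

definition PP :: "real \<Rightarrow> real \<Rightarrow> real" where
  "PP a z = (\<Sum>n. cc a n * z ^ n)"

lemma gamma_step:
  assumes "a > -1"
  shows "Gamma (real n + a + 2) = (real n + a + 1) * Gamma (real n + a + 1)"
proof -
  have "real n + a + 1 \<notin> \<int>\<^sub>\<le>\<^sub>0" using assms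
    using nonpos_Ints_nonpos[of "real n + a + 1"] by (cases "real n + a + 1 \<in> \<int>\<^sub>\<le>\<^sub>0") auto
  from Gamma_plus1[OF this] show ?thesis by (simp add: algebra_simps)
qed

lemma cc_Suc_gen:
  assumes "real n + a + 1 > 0"
  shows "cc a (Suc n) = - cc a n / ((real n + 1) * (real n + a + 1))"
proof -
  have g: "Gamma (real (Suc n) + a + 1) = (real n + a + 1) * Gamma (real n + a + 1)"
  proof -
    have "real n + a + 1 \<notin> \<int>\<^sub>\<le>\<^sub>0" using assms
      using nonpos_Ints_nonpos by force
    from Gamma_plus1[OF this] show ?thesis by (simp add: algebra_simps)
  qed
  show ?thesis unfolding cc_def g by (simp add: field_simps)
qed

lemma cc_Suc:
  assumes "a > -1"
  shows "cc a (Suc n) = - cc a n / ((real n + 1) * (real n + a + 1))"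
  by (rule cc_Suc_gen) (use assms in linarith)

lemma cc_summable:
  shows "summable (\<lambda>n. cc a n * z ^ n)"
proof (rule summable_ratio_test[where c="1/2" and N="nat \<lceil>2 * \<bar>z\<bar>\<rceil> + nat \<lceil>\<bar>a\<bar>\<rceil> + 2"])
  fix n assume n: "nat \<lceil>2 * \<bar>z\<bar>\<rceil> + nat \<lceil>\<bar>a\<bar>\<rceil> + 2 \<le> n"
  have pos: "real n + a + 1 > 1" using n by linarith
  have n1: "real n + 1 \<ge> 2 * \<bar>z\<bar>" using n by linarith
  have prod: "(real n + 1) * (real n + a + 1) \<ge> 2 * \<bar>z\<bar>"
  proof -
    have "real n + 1 \<le> (real n + 1) * (real n + a + 1)"
      using mult_left_mono[of 1 "real n + a + 1" "real n + 1"] pos by simp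
    thus ?thesis using n1 by linarith
  qed
  have ab: "\<bar>(real n + 1) * (real n + a + 1)\<bar> = (real n + 1) * (real n + a + 1)"
    using pos by simp
  have "norm (cc a (Suc n) * z ^ Suc n) = \<bar>z\<bar> / \<bar>(real n + 1) * (real n + a + 1)\<bar> * norm (cc a n * z ^ n)"
    using pos by (simp add: cc_Suc_gen abs_mult power_abs abs_divide)
  also have "\<dots> = \<bar>z\<bar> / ((real n + 1) * (real n + a + 1)) * norm (cc a n * z ^ n)"
    by (simp only: ab)
  also have "\<dots> \<le> 1/2 * norm (cc a n * z ^ n)"
  proof (rule mult_right_mono)
    show "\<bar>z\<bar> / ((real n + 1) * (real n + a + 1)) \<le> 1 / 2"
      using prod pos by (simp add: divide_simps)
  qed simp
  finally show "norm (cc a (Suc n) * z ^ Suc n) \<le> 1/2 * norm (cc a n * z ^ n)" .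
qed simp

lemma diffs_cc:
  assumes "a > -1"
  shows "diffs (cc a) = (\<lambda>n. - cc (a + 1) n)"
proof
  fix n
  have e: "real n + (a + 1) + 1 = real n + a + 2" by simp
  have p: "real n + a + 1 > 0" using assms by linarith
  have g: "Gamma (real n + a + 1) > 0" using p by simp
  have "diffs (cc a) n = real (Suc n) * (- cc a n / ((real n + 1) * (real n + a + 1)))"
    unfolding diffs_def cc_Suc[OF assms] by simp
  also have "\<dots> = ((real n + 1) * (- cc a n)) / ((real n + 1) * (real n + a + 1))"
    by (simp only: of_nat_Suc add.commute[of 1 "real n"] times_divide_eq_right)
  also have "\<dots> = - cc a n / (real n + a + 1)" by (rule mult_divide_mult_cancel_left) simp
  finally have 1: "diffs (cc a) n = - cc a n / (real n + a + 1)" .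
  have 2: "cc (a + 1) n = cc a n / (real n + a + 1)"
    unfolding cc_def e gamma_step[OF assms] by (simp add: field_simps)
  show "diffs (cc a) n = - cc (a + 1) n"
    unfolding 1 2 by simp
qed

lemma cc_shift:
  assumes "a > -1"
  shows "cc (a + 1) n = cc a n / (real n + a + 1)"
proof -
  have e: "real n + (a + 1) + 1 = real n + a + 2" by simp
  show ?thesis unfolding cc_def e gamma_step[OF assms] by (simp add: field_simps)
qed

lemma PP_fun: "PP a = (\<lambda>z. \<Sum>n. cc a n * z ^ n)"
  by (rule ext) (simp add: PP_def)

lemma PP_sums: "(\<lambda>n. cc a n * z ^ n) sums PP a z"
  unfolding PP_def by (rule summable_sums[OF cc_summable])

lemma PP_deriv:
  assumes "a > -1"
  shows "(PP a has_field_derivative - PP (a + 1) z) (at z)"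
proof -
  have a1: "a + 1 > -1" using assms by simp
  have "(PP a has_field_derivative (\<Sum>n. diffs (cc a) n * z ^ n)) (at z)"
    unfolding PP_fun by (rule termdiffs_strong_converges_everywhere[OF cc_summable])
  moreover have "(\<Sum>n. diffs (cc a) n * z ^ n) = - PP (a + 1) z"
    unfolding diffs_cc[OF assms] PP_def
    using suminf_minus[OF cc_summable[of "a+1" z]] by simp
  ultimately show ?thesis by simp
qed

lemma PP_cont: "isCont (PP a) z"
  unfolding PP_fun by (rule isCont_powser_converges_everywhere[OF cc_summable])

lemma PP_zero: "PP a 0 = cc a 0"
  unfolding PP_def by (rule powser_zero)

lemma alg_id0:
  fixes X Y Z c :: real
  assumes "X \<noteq> 0" "Y \<noteq> 0" "Z \<noteq> 0"
  shows "(Z - X) * ((- c / (X * Y)) / Z) - (- c / (X * Y)) = c / (Y * Z)"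
  using assms by (simp add: field_simps)

lemma alg_id:
  fixes X Y Z a c :: real
  assumes "X > 0" "Y > 0" "Z = Y + 1" "X = Z - (a + 1)"
  shows "(a + 1) * ((- c / (X * Y)) / Z) - (- c / (X * Y)) = c / (Y * Z)"
proof -
  have h: "a + 1 = Z - X" using assms by simp
  show ?thesis unfolding h by (rule alg_id0) (use assms in auto)
qed

lemma PP_rec:
  assumes "a > -1"
  shows "z * PP (a + 2) z = (a + 1) * PP (a + 1) z - PP a z"
proof -
  have a1: "a + 1 > -1" "a + 2 > -1" using assms by simp_all
  define d where "d n = (if n = 0 then 0 else cc (a + 2) (n - 1))" for n
  have "(\<lambda>n. cc (a + 2) n * z ^ n * z) sums (PP (a + 2) z * z)"
    by (rule sums_mult2[OF PP_sums])
  moreover have "(\<lambda>n. cc (a + 2) n * z ^ n * z) = (\<lambda>n. d (Suc n) * z ^ Suc n)"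
    by (rule ext) (simp add: d_def)
  ultimately have "(\<lambda>n. d (Suc n) * z ^ Suc n) sums (PP (a + 2) z * z)" by simp
  hence s1: "(\<lambda>n. d n * z ^ n) sums (PP (a + 2) z * z)"
    using sums_Suc_iff[of "\<lambda>n. d n * z ^ n"] by (simp add: d_def)
  have s2: "(\<lambda>n. (a + 1) * (cc (a + 1) n * z ^ n) - cc a n * z ^ n) sums ((a + 1) * PP (a + 1) z - PP a z)"
    by (intro sums_diff sums_mult PP_sums)
  have eq: "d n * z ^ n = (a + 1) * (cc (a + 1) n * z ^ n) - cc a n * z ^ n" for n
  proof (cases n)
    case 0
    have p: "a + 1 \<noteq> 0" using assms by simp
    show ?thesis using 0 p by (simp add: d_def cc_shift[OF assms])
  next
    case (Suc k)
    have p1: "real k + a + 1 > 0" "real k + a + 2 > 0" using assms by linarith+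
    have c2: "cc (a + 2) k = cc a k / ((real k + a + 1) * (real k + a + 2))"
    proof -
      have "cc (a + 2) k = cc ((a + 1) + 1) k" by (simp add: add.assoc)
      also have "\<dots> = cc (a + 1) k / (real k + (a + 1) + 1)" by (rule cc_shift[OF a1(1)])
      also have "\<dots> = cc a k / ((real k + a + 1) * (real k + a + 2))"
        unfolding cc_shift[OF assms] by (simp add: add.assoc)
      finally show ?thesis .
    qed
    have c1: "cc (a + 1) (Suc k) = cc a (Suc k) / (real k + a + 2)"
      using cc_shift[OF assms, of "Suc k"] by (simp add: add.commute add.left_commute)
    have c0: "cc a (Suc k) = - cc a k / ((real k + 1) * (real k + a + 1))"
      by (rule cc_Suc[OF assms])
    have "(a + 1) * cc (a + 1) (Suc k) - cc a (Suc k) = cc a k / ((real k + a + 1) * (real k + a + 2))"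
      unfolding c1 c0 using p1 alg_id[of "real k + 1" "real k + a + 1" "real k + a + 2" a "cc a k"] by simp
    note idf = this
    have "d n = cc (a + 2) k" using Suc by (simp add: d_def)
    also have "\<dots> = (a + 1) * cc (a + 1) (Suc k) - cc a (Suc k)"
      by (simp only: c2 idf)
    finally have dn: "d n = (a + 1) * cc (a + 1) (Suc k) - cc a (Suc k)" .
    have dn': "d (Suc k) = (a + 1) * cc (a + 1) (Suc k) - cc a (Suc k)" using dn Suc by simp
    show ?thesis unfolding Suc dn' by (simp only: left_diff_distrib mult.assoc)
  qed
  from s1 have "(\<lambda>n. (a + 1) * (cc (a + 1) n * z ^ n) - cc a n * z ^ n) sums (PP (a + 2) z * z)"
    using eq by simp
  from sums_unique2[OF this s2] show ?thesis by (simp add: mult.commute)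
qed

lemma alg2:
  fixes x P0 P1 P2 a :: real
  assumes "x * P2 = (a + 1) * P1 - P0"
  shows "2 * P0 * (- P1) + (1 * P1 ^ 2 + x * (2 * P1 * (- P2))) = - (2 * a + 1) * P1 ^ 2"
proof -
  have "2 * P0 * (- P1) + (1 * P1 ^ 2 + x * (2 * P1 * (- P2))) = 2 * P0 * (- P1) + (P1 ^ 2 - 2 * P1 * (x * P2))"
    by (simp add: algebra_simps)
  also have "\<dots> = 2 * P0 * (- P1) + (P1 ^ 2 - 2 * P1 * ((a + 1) * P1 - P0))" using assms by simp
  also have "\<dots> = - (2 * a + 1) * P1 ^ 2" by (simp add: algebra_simps power2_eq_square)
  finally show ?thesis .
qed

lemma energy:
  assumes "a \<ge> -1/2" "z \<ge> 0"
  shows "PP a z ^ 2 + z * PP (a + 1) z ^ 2 \<le> (1 / Gamma (a + 1)) ^ 2"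
proof -
  have a: "a > -1" "a + 1 > -1" using assms by simp_all
  define Q where "Q z = PP a z ^ 2 + z * PP (a + 1) z ^ 2" for z
  have d: "(Q has_real_derivative - (2 * a + 1) * PP (a + 1) x ^ 2) (at x)" for x
  proof -
    have d1: "(PP a has_real_derivative - PP (a + 1) x) (at x)" by (rule PP_deriv[OF a(1)])
    have d2: "(PP (a + 1) has_real_derivative - PP (a + 1 + 1) x) (at x)" by (rule PP_deriv[OF a(2)])
    have e1: "((\<lambda>x. PP a x ^ 2) has_real_derivative 2 * PP a x * (- PP (a + 1) x)) (at x)"
      by (rule DERIV_cong[OF DERIV_power[OF d1, of 2]]) (simp add: algebra_simps)
    have e2: "((\<lambda>x. PP (a + 1) x ^ 2) has_real_derivative 2 * PP (a + 1) x * (- PP (a + 1 + 1) x)) (at x)"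
      by (rule DERIV_cong[OF DERIV_power[OF d2, of 2]]) (simp add: algebra_simps)
    have e3: "((\<lambda>x. x * PP (a + 1) x ^ 2) has_real_derivative (1 * PP (a + 1) x ^ 2 + x * (2 * PP (a + 1) x * (- PP (a + 1 + 1) x)))) (at x)"
      by (rule DERIV_cong[OF DERIV_mult[OF DERIV_ident e2]]) (simp add: algebra_simps)
    have "(Q has_real_derivative (2 * PP a x * (- PP (a + 1) x) + (1 * PP (a + 1) x ^ 2 + x * (2 * PP (a + 1) x * (- PP (a + 1 + 1) x))))) (at x)"
      unfolding Q_def by (rule DERIV_add[OF e1 e3])
    note dQ = this
    have rec: "x * PP (a + 1 + 1) x = (a + 1) * PP (a + 1) x - PP a x"
      using PP_rec[OF a(1), of x] by (simp add: add.assoc)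
    show ?thesis by (rule DERIV_cong[OF dQ alg2[OF rec]])
  qed
  have "Q z \<le> Q 0"
  proof (rule DERIV_nonpos_imp_nonincreasing[OF assms(2)])
    fix x assume "0 \<le> x" "x \<le> z"
    show "\<exists>y. DERIV Q x :> y \<and> y \<le> 0"
      using d[of x] assms(1) by (intro exI[of _ "- (2 * a + 1) * PP (a + 1) x ^ 2"] conjI)
        (simp_all add: mult_nonpos_nonneg)
  qed
  also have "Q 0 = (1 / Gamma (a + 1)) ^ 2"
    unfolding Q_def PP_zero by (simp add: cc_def power_divide)
  finally show ?thesis unfolding Q_def .
qed

lemma tildeJ_PP: "tildeJ a t = PP a ((t / 2) ^ 2) / 2 powr a"
  unfolding tildeJ_def PP_def by (simp add: power_mult cc_def)

lemma tJ_bound: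
  assumes "a \<ge> -1/2"
  shows "\<bar>tildeJ a t\<bar> \<le> 1 / (Gamma (a + 1) * 2 powr a)"
proof -
  have g: "Gamma (a + 1) > 0" using assms by simp
  have z: "(t / 2) ^ 2 \<ge> 0" by simp
  have "PP a ((t / 2) ^ 2) ^ 2 \<le> (1 / Gamma (a + 1)) ^ 2"
  proof -
    have "0 \<le> (t / 2) ^ 2 * PP (a + 1) ((t / 2) ^ 2) ^ 2" using z by simp
    thus ?thesis using energy[OF assms z] by linarith
  qed
  hence h: "\<bar>PP a ((t / 2) ^ 2)\<bar> \<le> 1 / Gamma (a + 1)"
    using g by (simp add: power2_le_iff_abs_le)
  have "\<bar>tildeJ a t\<bar> = \<bar>PP a ((t / 2) ^ 2)\<bar> / 2 powr a"
    unfolding tildeJ_PP by (simp add: abs_divide)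
  also have "\<dots> \<le> (1 / Gamma (a + 1)) / 2 powr a"
    by (rule divide_right_mono[OF h]) simp
  also have "\<dots> = 1 / (Gamma (a + 1) * 2 powr a)" by simp
  finally show ?thesis .
qed

lemma tJ_bound2:
  assumes "b \<ge> 1/2"
  shows "\<bar>t * tildeJ b t\<bar> \<le> 2 / (Gamma b * 2 powr b)"
proof -
  have a: "b - 1 \<ge> -1/2" using assms by simp
  have g: "Gamma b > 0" using assms by simp
  have z: "(t / 2) ^ 2 \<ge> 0" by simp
  have "(t / 2) ^ 2 * PP b ((t / 2) ^ 2) ^ 2 \<le> (1 / Gamma b) ^ 2"
  proof -
    have e: "PP (b - 1) ((t / 2) ^ 2) ^ 2 + (t / 2) ^ 2 * PP b ((t / 2) ^ 2) ^ 2 \<le> (1 / Gamma b) ^ 2"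
      using energy[OF a z] by simp
    have "0 \<le> PP (b - 1) ((t / 2) ^ 2) ^ 2" by simp
    thus ?thesis using e by linarith
  qed
  moreover have "(t / 2 * PP b ((t / 2) ^ 2)) ^ 2 = (t / 2) ^ 2 * PP b ((t / 2) ^ 2) ^ 2"
    by (simp only: power_mult_distrib)
  ultimately have "(t / 2 * PP b ((t / 2) ^ 2)) ^ 2 \<le> (1 / Gamma b) ^ 2"
    by simp
  hence h1: "\<bar>t / 2 * PP b ((t / 2) ^ 2)\<bar> \<le> 1 / Gamma b"
    using g by (simp add: power2_le_iff_abs_le)
  have "\<bar>t * PP b ((t / 2) ^ 2)\<bar> = 2 * \<bar>t / 2 * PP b ((t / 2) ^ 2)\<bar>"
    by (simp add: abs_mult)
  also have "\<dots> \<le> 2 * (1 / Gamma b)" using h1 by simp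
  finally have h: "\<bar>t * PP b ((t / 2) ^ 2)\<bar> \<le> 2 / Gamma b" by simp
  have "\<bar>t * tildeJ b t\<bar> = \<bar>t * PP b ((t / 2) ^ 2)\<bar> / 2 powr b"
    unfolding tildeJ_PP by (simp add: abs_divide abs_mult)
  also have "\<dots> \<le> (2 / Gamma b) / 2 powr b"
    by (rule divide_right_mono[OF h]) simp
  also have "\<dots> = 2 / (Gamma b * 2 powr b)" by simp
  finally show ?thesis .
qed

lemma continuous_on_tildeJ [continuous_intros]:
  "continuous_on S f \<Longrightarrow> continuous_on S (\<lambda>x. tildeJ a (f x))"
proof -
  assume f: "continuous_on S f"
  have c: "continuous_on UNIV (PP a)"
    by (rule continuous_at_imp_continuous_on) (auto intro: PP_cont)
  have "continuous_on S (\<lambda>x. PP a ((f x / 2) ^ 2))"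
    by (rule continuous_on_compose2[OF c]) (auto intro!: continuous_intros f)
  thus ?thesis unfolding tildeJ_PP by (intro continuous_intros) auto
qed



lemma continuous_on_if_const [continuous_intros]:
  "continuous_on S f \<Longrightarrow> continuous_on S g \<Longrightarrow> continuous_on S (\<lambda>z. if P then f z else g z)"
  by (cases P) auto

lemma continuous_on_wedge_norm [continuous_intros]:
  fixes X Y :: "'a::topological_space \<Rightarrow> (real, 'n::{finite,linorder}) vec"
  shows "continuous_on S X \<Longrightarrow> continuous_on S Y \<Longrightarrow> continuous_on S (\<lambda>z. wedge_norm (X z) (Y z))"
  unfolding wedge_norm_def wedge_coef_def by (intro continuous_intros)

lemma continuous_on_wedge [continuous_intros]:
  fixes X Y :: "'a::topological_space \<Rightarrow> (real, 'n::{finite,linorder}) vec"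
  shows "continuous_on S X \<Longrightarrow> continuous_on S Y \<Longrightarrow> continuous_on S (\<lambda>z. wedge (X z) (Y z) A)"
  unfolding wedge_def wedge_coef_def by (intro continuous_intros)

lemma continuous_on_f_tilde [continuous_intros]:
  "continuous_on S s \<Longrightarrow> continuous_on S t \<Longrightarrow> continuous_on S (\<lambda>z. f_tilde m i (s z) (t z))"
  unfolding f_tilde_def by (intro continuous_intros)

lemma continuous_on_f_hat [continuous_intros]:
  "continuous_on S s \<Longrightarrow> continuous_on S t \<Longrightarrow> continuous_on S (\<lambda>z. f_hat m i (s z) (t z))"
  unfolding f_hat_def by (intro continuous_intros)

lemma continuous_on_g_fun [continuous_intros]:
  "continuous_on S s \<Longrightarrow> continuous_on S t \<Longrightarrow> continuous_on S (\<lambda>z. g_fun m i (s z) (t z))"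
  unfolding g_fun_def by (intro continuous_intros)

lemma continuous_on_cl_scalar [continuous_intros]:
  "continuous_on S c \<Longrightarrow> continuous_on S (\<lambda>z. cl_scalar (c z) A)"
  unfolding cl_scalar_def by (intro continuous_intros)

lemma continuous_on_K_plus [continuous_intros]:
  fixes X Y :: "'a::topological_space \<Rightarrow> (real, 'n::{finite,linorder}) vec"
  shows "continuous_on S X \<Longrightarrow> continuous_on S Y \<Longrightarrow> continuous_on S (\<lambda>z. K_plus i e (X z) (Y z) A)"
  unfolding K_plus_def Let_def
  by (cases "even CARD('n)") (simp_all add: continuous_intros)

lemma continuous_on_cl_mult [continuous_intros]:
  fixes u v :: "'a::topological_space \<Rightarrow> 'n::{finite,linorder} clif"
  shows "(\<And>A. continuous_on S (\<lambda>z. u z A)) \<Longrightarrow> (\<And>A. continuous_on S (\<lambda>z. v z A)) \<Longrightarrow>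
    continuous_on S (\<lambda>z. cl_mult (u z) (v z) C)"
  unfolding cl_mult_def by (intro continuous_intros) auto



lemma term_bound:
  fixes s K1 K2 J B R :: real
  assumes "\<bar>s\<bar> \<le> R" "1 \<le> R" "j \<le> i" "\<bar>J\<bar> \<le> B"
  shows "\<bar>s ^ j * K1 * K2 * J\<bar> \<le> (\<bar>K1 * K2\<bar> * B) * R ^ i"
proof -
  have "\<bar>s\<bar> ^ j \<le> R ^ j" by (rule power_mono[OF assms(1)]) simp
  also have "\<dots> \<le> R ^ i" by (rule power_increasing[OF assms(3,2)])
  finally have sj: "\<bar>s ^ j\<bar> \<le> R ^ i" by (simp add: power_abs)
  have "\<bar>s ^ j * K1 * K2 * J\<bar> = \<bar>s ^ j\<bar> * (\<bar>K1 * K2\<bar> * \<bar>J\<bar>)"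
    by (simp add: abs_mult)
  also have "\<dots> \<le> R ^ i * (\<bar>K1 * K2\<bar> * B)"
    by (intro mult_mono sj mult_left_mono assms(4)) (use assms(2,3) in auto)
  finally show ?thesis by (simp add: mult.commute)
qed

lemma sum_bound:
  fixes T :: "nat \<Rightarrow> real"
  assumes "\<And>l. l \<in> L \<Longrightarrow> \<bar>T l\<bar> \<le> c l * W"
  shows "\<bar>\<Sum>l\<in>L. T l\<bar> \<le> (\<Sum>l\<in>L. c l) * W"
proof -
  have "\<bar>\<Sum>l\<in>L. T l\<bar> \<le> (\<Sum>l\<in>L. \<bar>T l\<bar>)" by (rule sum_abs)
  also have "\<dots> \<le> (\<Sum>l\<in>L. c l * W)" by (rule sum_mono) (rule assms)
  also have "\<dots> = (\<Sum>l\<in>L. c l) * W" by (simp add: sum_distrib_right)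
  finally show ?thesis .
qed

lemma kappa_pos: "kappa m > 0"
  unfolding kappa_def by simp

lemma abs_sigma: "\<bar>sigma m\<bar> = 1"
  unfolding sigma_def by simp

definition BJ :: "real \<Rightarrow> real" where "BJ a = 1 / (Gamma (a + 1) * 2 powr a)"
definition BJ2 :: "real \<Rightarrow> real" where "BJ2 b = 2 / (Gamma b * 2 powr b)"

lemma f_tilde_bound:
  assumes "i + 2 \<le> m" "\<bar>s\<bar> \<le> R" "1 \<le> R"
  shows "\<bar>f_tilde m i s t\<bar> \<le> (kappa m * (\<Sum>l\<in>{0..(i - 1) div 2}.
            \<bar>(1 / (2 ^ l * fact l)) * (Gamma (real i + 1) / Gamma (real i - 2 * real l))\<bar>
             * BJ ((real m - 2 * real l - 3) / 2))) * R ^ i"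
proof (cases "i = 0")
  case True
  thus ?thesis using kappa_pos[of m] by (simp add: f_tilde_def)
next
  case False
  let ?T = "\<lambda>l. s ^ (i - 1 - 2 * l) * (1 / (2 ^ l * fact l))
        * (Gamma (real i + 1) / Gamma (real i - 2 * real l))
        * tildeJ ((real m - 2 * real l - 3) / 2) t"
  have "\<bar>\<Sum>l\<in>{0..(i - 1) div 2}. ?T l\<bar> \<le> (\<Sum>l\<in>{0..(i - 1) div 2}.
            \<bar>(1 / (2 ^ l * fact l)) * (Gamma (real i + 1) / Gamma (real i - 2 * real l))\<bar>
             * BJ ((real m - 2 * real l - 3) / 2)) * R ^ i"
  proof (rule sum_bound)
    fix l assume l: "l \<in> {0..(i - 1) div 2}"
    have "2 * l \<le> i - 1" using l by auto
    hence "real m - 2 * real l - 3 \<ge> 0" using assms(1) False by linarith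
    hence a: "(real m - 2 * real l - 3) / 2 \<ge> -1/2" by simp
    show "\<bar>?T l\<bar> \<le> \<bar>(1 / (2 ^ l * fact l)) * (Gamma (real i + 1) / Gamma (real i - 2 * real l))\<bar>
             * BJ ((real m - 2 * real l - 3) / 2) * R ^ i"
      by (rule term_bound[OF assms(2,3)]) (use tJ_bound[OF a] in \<open>auto simp: BJ_def\<close>)
  qed
  thus ?thesis using False kappa_pos[of m]
    by (simp add: f_tilde_def abs_mult mult.assoc mult_left_mono)
qed

lemma f_hat_bound:
  assumes "i + 2 \<le> m" "\<bar>s\<bar> \<le> R" "1 \<le> R"
  shows "\<bar>f_hat m i s t\<bar> \<le> (kappa m * (\<Sum>l\<in>{0..i div 2}.
            \<bar>(1 / (2 ^ l * fact l)) * (Gamma (real i + 1) / Gamma (real i + 1 - 2 * real l))\<bar>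
             * BJ ((real m - 2 * real l - 3) / 2))) * R ^ i"
proof -
  let ?T = "\<lambda>l. s ^ (i - 2 * l) * (1 / (2 ^ l * fact l))
        * (Gamma (real i + 1) / Gamma (real i + 1 - 2 * real l))
        * tildeJ ((real m - 2 * real l - 3) / 2) t"
  have "\<bar>\<Sum>l\<in>{0..i div 2}. ?T l\<bar> \<le> (\<Sum>l\<in>{0..i div 2}.
            \<bar>(1 / (2 ^ l * fact l)) * (Gamma (real i + 1) / Gamma (real i + 1 - 2 * real l))\<bar>
             * BJ ((real m - 2 * real l - 3) / 2)) * R ^ i"
  proof (rule sum_bound)
    fix l assume l: "l \<in> {0..i div 2}"
    have "2 * l \<le> i" using l by auto
    hence "real m - 2 * real l - 3 \<ge> -1" using assms(1) by linarith
    hence a: "(real m - 2 * real l - 3) / 2 \<ge> -1/2" by simp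
    show "\<bar>?T l\<bar> \<le> \<bar>(1 / (2 ^ l * fact l)) * (Gamma (real i + 1) / Gamma (real i + 1 - 2 * real l))\<bar>
             * BJ ((real m - 2 * real l - 3) / 2) * R ^ i"
      by (rule term_bound[OF assms(2,3)]) (use tJ_bound[OF a] in \<open>auto simp: BJ_def\<close>)
  qed
  thus ?thesis using kappa_pos[of m]
    by (simp add: f_hat_def abs_mult abs_sigma mult.assoc mult_left_mono)
qed

lemma g_fun_bound:
  assumes "i + 2 \<le> m" "\<bar>s\<bar> \<le> R" "1 \<le> R"
  shows "\<bar>g_fun m i s t * t\<bar> \<le> (kappa m * (\<Sum>l\<in>{0..i div 2}.
            \<bar>(1 / (2 ^ l * fact l)) * (Gamma (real i + 1) / Gamma (real i + 1 - 2 * real l))\<bar>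
             * BJ2 ((real m - 2 * real l - 1) / 2))) * R ^ i"
proof -
  let ?T = "\<lambda>l. s ^ (i - 2 * l) * (1 / (2 ^ l * fact l))
        * (Gamma (real i + 1) / Gamma (real i + 1 - 2 * real l))
        * (t * tildeJ ((real m - 2 * real l - 1) / 2) t)"
  have "\<bar>\<Sum>l\<in>{0..i div 2}. ?T l\<bar> \<le> (\<Sum>l\<in>{0..i div 2}.
            \<bar>(1 / (2 ^ l * fact l)) * (Gamma (real i + 1) / Gamma (real i + 1 - 2 * real l))\<bar>
             * BJ2 ((real m - 2 * real l - 1) / 2)) * R ^ i"
  proof (rule sum_bound)
    fix l assume l: "l \<in> {0..i div 2}"
    have "2 * l \<le> i" using l by auto
    hence "real m - 2 * real l - 1 \<ge> 1" using assms(1) by linarith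
    hence a: "(real m - 2 * real l - 1) / 2 \<ge> 1/2" by simp
    show "\<bar>?T l\<bar> \<le> \<bar>(1 / (2 ^ l * fact l)) * (Gamma (real i + 1) / Gamma (real i + 1 - 2 * real l))\<bar>
             * BJ2 ((real m - 2 * real l - 1) / 2) * R ^ i"
      by (rule term_bound[OF assms(2,3)]) (use tJ_bound2[OF a] in \<open>auto simp: BJ2_def\<close>)
  qed
  moreover have "g_fun m i s t * t = kappa m * (\<Sum>l\<in>{0..i div 2}. ?T l)"
    unfolding g_fun_def by (simp add: sum_distrib_left sum_distrib_right ac_simps)
  ultimately show ?thesis using kappa_pos[of m]
    by (simp add: abs_mult mult.assoc mult_left_mono)
qed



lemma wedge_norm_nonneg: "0 \<le> wedge_norm x y"
  unfolding wedge_norm_def by (intro real_sqrt_ge_zero sum_nonneg) auto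

lemma coef_le:
  fixes x y :: "(real, 'n::{finite,linorder}) vec"
  assumes "j < k"
  shows "\<bar>wedge_coef x y j k\<bar> \<le> wedge_norm x y"
proof -
  let ?F = "\<lambda>j' k'. if j' < k' then (wedge_coef x y j' k')^2 else 0"
  have "(wedge_coef x y j k)^2 = ?F j k" using assms by simp
  also have "\<dots> \<le> (\<Sum>k'\<in>UNIV. ?F j k')"
    by (rule member_le_sum) auto
  also have "\<dots> \<le> (\<Sum>j'\<in>UNIV. \<Sum>k'\<in>UNIV. ?F j' k')"
    by (rule member_le_sum[of j UNIV "\<lambda>j'. \<Sum>k'\<in>UNIV. ?F j' k'"]) (auto intro!: sum_nonneg)
  finally have "\<bar>wedge_coef x y j k\<bar>^2 \<le> (\<Sum>j'\<in>UNIV. \<Sum>k'\<in>UNIV. ?F j' k')" by simp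
  thus ?thesis unfolding wedge_norm_def by (rule real_le_rsqrt)
qed

lemma wedge_bound:
  fixes x y :: "(real, 'n::{finite,linorder}) vec"
  shows "norm (wedge x y A) \<le> real (CARD('n) * CARD('n)) * wedge_norm x y"
proof -
  have "norm (wedge x y A) \<le> (\<Sum>j\<in>UNIV. norm (\<Sum>k\<in>UNIV. if j < k \<and> A = {j, k} then complex_of_real (wedge_coef x y j k) else 0))"
    unfolding wedge_def by (rule norm_sum)
  also have "\<dots> \<le> (\<Sum>j\<in>UNIV. \<Sum>k\<in>UNIV. norm (if j < k \<and> A = {j, k} then complex_of_real (wedge_coef x y j k) else 0))"
    by (intro sum_mono norm_sum)
  also have "\<dots> \<le> (\<Sum>j\<in>(UNIV::'n set). \<Sum>k\<in>(UNIV::'n set). wedge_norm x y)"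
    by (intro sum_mono) (auto simp: coef_le wedge_norm_nonneg)
  also have "\<dots> = real (CARD('n) * CARD('n)) * wedge_norm x y" by simp
  finally show ?thesis .
qed

lemma inner_le_R: "\<bar>inner x y\<bar> \<le> (1 + norm x) * (1 + norm (y::'a::real_inner))"
proof -
  have "\<bar>inner x y\<bar> \<le> norm x * norm y" by (rule Cauchy_Schwarz_ineq2)
  also have "\<dots> \<le> (1 + norm x) * (1 + norm y)"
    by (intro mult_mono) auto
  finally show ?thesis .
qed

lemma R_ge1: "1 \<le> (1 + norm x) * (1 + norm (y::'a::real_normed_vector))"
  using mult_mono[of 1 "1 + norm x" 1 "1 + norm y"] by simp

lemma norm_cl_scalar: "norm (cl_scalar c A) \<le> norm c"
  unfolding cl_scalar_def by simp

lemma K_bound: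
  assumes "2 \<le> CARD('n)" "i \<le> CARD('n) - 2"
  shows "\<exists>D\<ge>0. \<forall>(x::(real, 'n::{finite,linorder}) vec) y A.
           norm (K_plus i e x y A) \<le> D * ((1 + norm x) * (1 + norm y)) ^ i"
proof -
  define m where "m = CARD('n)"
  have im: "i + 2 \<le> m" using assms unfolding m_def by simp
  define C1 where "C1 = kappa m * (\<Sum>l\<in>{0..(i - 1) div 2}.
            \<bar>(1 / (2 ^ l * fact l)) * (Gamma (real i + 1) / Gamma (real i - 2 * real l))\<bar>
             * BJ ((real m - 2 * real l - 3) / 2))"
  define C2 where "C2 = kappa m * (\<Sum>l\<in>{0..i div 2}.
            \<bar>(1 / (2 ^ l * fact l)) * (Gamma (real i + 1) / Gamma (real i + 1 - 2 * real l))\<bar>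
             * BJ ((real m - 2 * real l - 3) / 2))"
  define C3 where "C3 = kappa m * (\<Sum>l\<in>{0..i div 2}.
            \<bar>(1 / (2 ^ l * fact l)) * (Gamma (real i + 1) / Gamma (real i + 1 - 2 * real l))\<bar>
             * BJ2 ((real m - 2 * real l - 1) / 2))"
  define D where "D = (1 + norm e) * (\<bar>C1\<bar> + \<bar>C2\<bar> + real (m * m) * \<bar>C3\<bar>)"
  have D0: "D \<ge> 0" unfolding D_def by (intro mult_nonneg_nonneg add_nonneg_nonneg) auto
  have "norm (K_plus i e x y A) \<le> D * ((1 + norm x) * (1 + norm y)) ^ i"
    for x y :: "(real, 'n) vec" and A
  proof -
    define R where "R = (1 + norm x) * (1 + norm y)"
    define s where "s = inner x y"
    define t where "t = wedge_norm x y"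
    have sR: "\<bar>s\<bar> \<le> R" unfolding s_def R_def by (rule inner_le_R)
    have R1: "1 \<le> R" unfolding R_def by (rule R_ge1)
    have t0: "0 \<le> t" unfolding t_def by (rule wedge_norm_nonneg)
    define ft where "ft = f_tilde m i s t"
    define fh where "fh = f_hat m i s t"
    define g where "g = g_fun m i s t"
    have b1: "\<bar>ft\<bar> \<le> C1 * R ^ i" unfolding ft_def C1_def by (rule f_tilde_bound[OF im sR R1])
    have b2: "\<bar>fh\<bar> \<le> C2 * R ^ i" unfolding fh_def C2_def by (rule f_hat_bound[OF im sR R1])
    have b3: "\<bar>g * t\<bar> \<le> C3 * R ^ i" unfolding g_def C3_def by (rule g_fun_bound[OF im sR R1])
    have w: "norm (wedge x y A) \<le> real (m * m) * t"
      unfolding m_def t_def by (rule wedge_bound)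
    have gw: "\<bar>g\<bar> * norm (wedge x y A) \<le> real (m * m) * \<bar>g * t\<bar>"
    proof -
      have "\<bar>g\<bar> * norm (wedge x y A) \<le> \<bar>g\<bar> * (real (m * m) * t)"
        by (rule mult_left_mono[OF w]) simp
      also have "\<dots> = real (m * m) * \<bar>g * t\<bar>" using t0 by (simp add: abs_mult)
      finally show ?thesis .
    qed
    define P where "P = \<bar>ft\<bar> + \<bar>fh\<bar> + real (m * m) * \<bar>g * t\<bar>"
    have P0: "0 \<le> P" unfolding P_def by simp
    have KP: "norm (K_plus i e x y A) \<le> (1 + norm e) * P"
    proof (cases "even m")
      case True
      have K: "K_plus i e x y A = cl_scalar (complex_of_real (ft + fh)) A + complex_of_real g * wedge x y A"
        unfolding K_plus_def Let_def ft_def fh_def g_def s_def t_def m_def using True[unfolded m_def] by simp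
      have "norm (K_plus i e x y A) \<le> norm (complex_of_real (ft + fh)) + \<bar>g\<bar> * norm (wedge x y A)"
        unfolding K by (rule order_trans[OF norm_triangle_ineq add_mono[OF norm_cl_scalar]]) (simp add: norm_mult)
      also have "\<dots> \<le> P"
      proof -
        have "norm (complex_of_real (ft + fh)) \<le> \<bar>ft\<bar> + \<bar>fh\<bar>"
          by (simp only: norm_of_real abs_triangle_ineq)
        thus ?thesis unfolding P_def using gw by linarith
      qed
      also have "\<dots> \<le> (1 + norm e) * P" using P0 by (simp add: mult_le_cancel_right1)
      finally show ?thesis .
    next
      case False
      have K: "K_plus i e x y A = cl_scalar (e * complex_of_real ft + \<i> * cnj e * complex_of_real fh) A
                 + e * complex_of_real g * wedge x y A"
        unfolding K_plus_def Let_def ft_def fh_def g_def s_def t_def m_def using False[unfolded m_def] by simp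
      have "norm (K_plus i e x y A) \<le> norm (e * complex_of_real ft + \<i> * cnj e * complex_of_real fh)
              + norm e * (\<bar>g\<bar> * norm (wedge x y A))"
        unfolding K by (rule order_trans[OF norm_triangle_ineq add_mono[OF norm_cl_scalar]]) (simp add: norm_mult)
      also have "\<dots> \<le> (norm e * \<bar>ft\<bar> + norm e * \<bar>fh\<bar>) + norm e * (real (m * m) * \<bar>g * t\<bar>)"
      proof (rule add_mono)
        show "norm (e * complex_of_real ft + \<i> * cnj e * complex_of_real fh) \<le> norm e * \<bar>ft\<bar> + norm e * \<bar>fh\<bar>"
          by (rule order_trans[OF norm_triangle_ineq]) (simp add: norm_mult)
        show "norm e * (\<bar>g\<bar> * norm (wedge x y A)) \<le> norm e * (real (m * m) * \<bar>g * t\<bar>)"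
          by (rule mult_left_mono[OF gw]) simp
      qed
      also have "\<dots> = norm e * P" unfolding P_def by (simp add: algebra_simps)
      also have "\<dots> \<le> (1 + norm e) * P" using P0 by (simp add: mult_right_mono)
      finally show ?thesis .
    qed
    have "P \<le> C1 * R ^ i + C2 * R ^ i + real (m * m) * (C3 * R ^ i)"
      unfolding P_def using b1 b2 b3 by (intro add_mono mult_left_mono) auto
    also have "\<dots> \<le> (\<bar>C1\<bar> + \<bar>C2\<bar> + real (m * m) * \<bar>C3\<bar>) * R ^ i"
      using R1 by (simp add: algebra_simps mult_right_mono add_mono)
    finally have "(1 + norm e) * P \<le> (1 + norm e) * ((\<bar>C1\<bar> + \<bar>C2\<bar> + real (m * m) * \<bar>C3\<bar>) * R ^ i)"
      by (rule mult_left_mono) simp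
    with KP show ?thesis unfolding D_def R_def by (simp add: mult.assoc)
  qed
  with D0 show ?thesis by blast
qed



lemma integrable_if_const:
  "integrable M f \<Longrightarrow> integrable M (\<lambda>x. if P then f x else 0)"
  by (cases P) auto

lemma integrable_Kf:
  fixes g :: "(real, 'n::{finite,linorder}) vec \<Rightarrow> complex" and h :: "(real, 'n) vec \<Rightarrow> real"
  assumes gc: "continuous_on UNIV g" and gb: "\<And>x. norm (g x) \<le> D * (1 + norm x) ^ i"
    and D0: "D \<ge> 0" and hB: "h \<in> B_space i"
  shows "integrable lborel (\<lambda>x. g x * complex_of_real (h x))"
proof -
  from hB have hi: "integrable lborel h" and hw: "integrable lborel (\<lambda>y. (1 + norm y) ^ i * \<bar>h y\<bar>)"
    unfolding B_space_def by auto
  have gm: "g \<in> borel_measurable lborel" using borel_measurable_continuous_onI[OF gc] by simp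
  have hm: "h \<in> borel_measurable lborel" using hi by (rule borel_measurable_integrable)
  show ?thesis
  proof (rule Bochner_Integration.integrable_bound[where f="\<lambda>x. D * ((1 + norm x) ^ i * \<bar>h x\<bar>)"])
    show "integrable lborel (\<lambda>x. D * ((1 + norm x) ^ i * \<bar>h x\<bar>))"
      using hw by (rule integrable_mult_right)
    show "(\<lambda>x. g x * complex_of_real (h x)) \<in> borel_measurable lborel"
      using gm hm by measurable
    show "AE x in lborel. norm (g x * complex_of_real (h x)) \<le> norm (D * ((1 + norm x) ^ i * \<bar>h x\<bar>))"
    proof (intro always_eventually allI)
      fix x
      have "norm (g x * complex_of_real (h x)) = norm (g x) * \<bar>h x\<bar>" by (simp add: norm_mult)
      also have "\<dots> \<le> D * (1 + norm x) ^ i * \<bar>h x\<bar>" by (rule mult_right_mono[OF gb]) simp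
      also have "\<dots> = norm (D * ((1 + norm x) ^ i * \<bar>h x\<bar>))" using D0 by (simp add: abs_mult mult.assoc)
      finally show "norm (g x * complex_of_real (h x)) \<le> norm (D * ((1 + norm x) ^ i * \<bar>h x\<bar>))" .
    qed
  qed
qed

lemma abs_cl_sign: "\<bar>cl_sign A B\<bar> = 1"
  unfolding cl_sign_def by simp

lemma norm_cl_mult:
  fixes u v :: "'n::{finite,linorder} clif"
  assumes "\<And>A. norm (u A) \<le> M"
  shows "norm (cl_mult u v C) \<le> real (card (UNIV :: 'n set set)) * (M * (\<Sum>B\<in>UNIV. norm (v B)))"
proof -
  have M0: "0 \<le> M" using assms[of "{}"] norm_ge_zero[of "u {}"] by linarith
  have "norm (cl_mult u v C) \<le> (\<Sum>A\<in>UNIV. norm (\<Sum>B\<in>UNIV.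
      if (A - B) \<union> (B - A) = C then complex_of_real (cl_sign A B) * u A * v B else 0))"
    unfolding cl_mult_def by (rule norm_sum)
  also have "\<dots> \<le> (\<Sum>A\<in>(UNIV :: 'n set set). \<Sum>B\<in>UNIV. M * norm (v B))"
  proof (intro sum_mono order_trans[OF norm_sum])
    fix A B :: "'n set"
    show "norm (if (A - B) \<union> (B - A) = C then complex_of_real (cl_sign A B) * u A * v B else 0) \<le> M * norm (v B)"
    proof (cases "(A - B) \<union> (B - A) = C")
      case True
      have "norm (complex_of_real (cl_sign A B) * u A * v B) = norm (u A) * norm (v B)"
        by (simp add: norm_mult abs_cl_sign)
      also have "\<dots> \<le> M * norm (v B)" by (rule mult_right_mono[OF assms]) simp
      finally show ?thesis using True by simp
    qed (use M0 in simp)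
  qed
  also have "\<dots> = real (card (UNIV :: 'n set set)) * (M * (\<Sum>B\<in>UNIV. norm (v B)))"
    by (simp add: sum_distrib_left)
  finally show ?thesis .
qed



theorem theorem6p2:
  fixes f :: "(real, 'n::{finite,linorder}) vec \<Rightarrow> ('n set \<Rightarrow> real)"
    and i :: nat and e :: complex
  assumes "CARD('n) \<ge> 2"
    and "i \<le> CARD('n) - 2"
    and "\<forall>A. (\<lambda>x. f x A) \<in> B_space i"
  shows "(\<forall>y A. integrable lborel
             (\<lambda>x. cl_mult (K_plus i e x y) (\<lambda>B. complex_of_real (f x B)) A))
         \<and> (\<forall>A. continuous_on UNIV (\<lambda>y. F_plus i e f y A))"
proof -
  obtain D where D0: "D \<ge> 0" and Db: "\<And>(x::(real, 'n) vec) y A.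
      norm (K_plus i e x y A) \<le> D * ((1 + norm x) * (1 + norm y)) ^ i"
    using K_bound[OF assms(1,2), of e] by blast
  have Kb: "norm (K_plus i e x y A) \<le> (D * (1 + norm y) ^ i) * (1 + norm x) ^ i"
    for x y :: "(real, 'n) vec" and A
    using Db[of x y A] by (simp add: power_mult_distrib ac_simps)
  have fB: "(\<lambda>x. f x B) \<in> B_space i" for B using assms(3) by blast
  have int1: "integrable lborel (\<lambda>x. cl_mult (K_plus i e x y) (\<lambda>B. complex_of_real (f x B)) A)"
    for y A
  proof -
    have t: "integrable lborel (\<lambda>x. complex_of_real (cl_sign A' B) * (K_plus i e x y A' * complex_of_real (f x B)))"
      for A' B
    proof (rule integrable_mult_right, rule integrable_Kf[OF _ Kb _ fB])
      show "continuous_on UNIV (\<lambda>x. K_plus i e x y A')" by (intro continuous_intros)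
      show "0 \<le> D * (1 + norm y) ^ i" using D0 by simp
    qed
    have t': "integrable lborel (\<lambda>x. complex_of_real (cl_sign A' B) * K_plus i e x y A' * complex_of_real (f x B))"
      for A' B using t[of A' B] by (simp add: mult.assoc)
    show ?thesis unfolding cl_mult_def
      by (rule Bochner_Integration.integrable_sum, rule Bochner_Integration.integrable_sum, rule integrable_if_const, rule t')
  qed
  have cont: "continuous_on UNIV (\<lambda>y. F_plus i e f y A)" for A
  proof -
    let ?G = "\<lambda>y x. cl_mult (K_plus i e x y) (\<lambda>B. complex_of_real (f x B)) A"
    have "continuous_on UNIV (\<lambda>y. integral\<^sup>L lborel (?G y))"
    proof (rule continuous_at_imp_continuous_on, intro ballI continuous_at_sequentiallyI)
      fix y0 :: "(real, 'n) vec" and u :: "nat \<Rightarrow> (real, 'n) vec"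
      assume u: "u \<longlonglongrightarrow> y0"
      have "Bseq u" using u by (intro convergent_imp_Bseq convergentI)
      then obtain Kb where Kb0: "Kb > 0" and uK: "\<And>n. norm (u n) \<le> Kb"
        unfolding Bseq_def by blast
      define w where "w x = (\<Sum>B\<in>UNIV. (real (card (UNIV :: 'n set set)) * (D * (1 + Kb) ^ i))
                               * ((1 + norm x) ^ i * \<bar>f x B\<bar>))" for x
      show "(\<lambda>n. integral\<^sup>L lborel (?G (u n))) \<longlonglongrightarrow> integral\<^sup>L lborel (?G y0)"
      proof (rule integral_dominated_convergence[where w=w])
        show "?G y0 \<in> borel_measurable lborel" using int1 by (rule borel_measurable_integrable)
        show "?G (u n) \<in> borel_measurable lborel" for n using int1 by (rule borel_measurable_integrable)
        show "integrable lborel w" unfolding w_def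
          using fB unfolding B_space_def by (intro Bochner_Integration.integrable_sum Bochner_Integration.integrable_mult_right) auto
        show "AE x in lborel. (\<lambda>n. ?G (u n) x) \<longlonglongrightarrow> ?G y0 x"
        proof (intro always_eventually allI)
          fix x :: "(real, 'n) vec"
          have "continuous_on UNIV (\<lambda>y. ?G y x)" by (intro continuous_intros)
          thus "(\<lambda>n. ?G (u n) x) \<longlonglongrightarrow> ?G y0 x"
            by (rule continuous_on_tendsto_compose[OF _ u]) auto
        qed
        show "AE x in lborel. norm (?G (u n) x) \<le> w x" for n
        proof (intro always_eventually allI)
          fix x :: "(real, 'n) vec"
          have M: "norm (K_plus i e x (u n) A') \<le> D * (1 + Kb) ^ i * (1 + norm x) ^ i" for A'
          proof -
            have "norm (K_plus i e x (u n) A') \<le> (D * (1 + norm (u n)) ^ i) * (1 + norm x) ^ i"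
              by (rule Kb)
            also have "\<dots> \<le> (D * (1 + Kb) ^ i) * (1 + norm x) ^ i"
              by (intro mult_right_mono mult_left_mono power_mono D0) (use uK[of n] in auto)
            finally show ?thesis .
          qed
          have "norm (?G (u n) x) \<le> real (card (UNIV :: 'n set set)) *
                  ((D * (1 + Kb) ^ i * (1 + norm x) ^ i) * (\<Sum>B\<in>UNIV. norm (complex_of_real (f x B))))"
            by (rule norm_cl_mult[OF M])
          also have "\<dots> = w x" unfolding w_def
            by (simp add: sum_distrib_left ac_simps)
          finally show "norm (?G (u n) x) \<le> w x" .
        qed
      qed
    qed
    thus ?thesis unfolding F_plus_def by (intro continuous_intros)
  qed
  show ?thesis using int1 cont by blast
qed

end
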